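(* Let $\alpha\in(0,1)$, $0<\kappa<1/\alpha$, $0<\varepsilon<M$, and let $(\tau_x)_{x\in\mathbb N}$ be i.i.d. positive random variables with $\lim_{u\to\infty}u^\alpha\mathbb P[\tau_x\ge u]=1$. For $0\le a<b\le\infty$ set $T_a^b(n)=\{x\in\{1,\dots,n\}:\tau_x/n^\kappa\in[a,b)\}$. Then there exists a function $h$ with $h(n)\to0$ as $n\to\infty$ such that, $\boldsymbol\tau$-a.s., \[\lim_{n\to\infty}\ \sup_{u\in[\varepsilon,M)\cap h(n)\mathbb Z}\ \Big|\frac{|T_u^{u+h(n)}(n)|}{h(n)\,n^{1-\alpha\kappa}}-\alpha u^{-\alpha-1}\Big|=0.\] *)

theory Defs
  imports "HOL-Probability.Probability"
begin

definition T_set :: "real \<Rightarrow> (nat \<Rightarrow> real) \<Rightarrow> real \<Rightarrow> ereal \<Rightarrow> nat \<Rightarrow> nat set" where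
  "T_set \<kappa> t a b n = {x \<in> {1..n}. a \<le> t x / real n powr \<kappa> \<and> ereal (t x / real n powr \<kappa>) < b}"

end

theory Submission
  imports Defs "HOL-Real_Asymp.Real_Asymp"
begin


lemma exp_neg_bound:
  fixes x :: real assumes "0 \<le> x" "x \<le> 1"
  shows "exp (- x) \<le> 1 - x + x^2"
proof -
  have "1 + x \<le> exp x" by (rule exp_ge_add_one_self)
  hence "exp (-x) \<le> 1 / (1 + x)" using assms by (simp add: exp_minus field_simps)
  also have "\<dots> \<le> 1 - x + x^2"
  proof -
    have "1 \<le> (1 - x + x^2) * (1 + x)" using assms by (simp add: algebra_simps power2_eq_square power3_eq_cube)
    thus ?thesis using assms by (simp add: field_simps)
  qed
  finally show ?thesis .
qed

lemma (in prob_space) mgf_bound: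
  fixes X :: "'i \<Rightarrow> 'a \<Rightarrow> real"
  assumes I: "finite I" and ind: "indep_vars (\<lambda>_. borel) X I"
    and rv: "\<And>i. i \<in> I \<Longrightarrow> X i \<in> borel_measurable M"
    and B: "B \<in> sets borel"
    and p: "\<And>i. i \<in> I \<Longrightarrow> prob {\<omega>\<in>space M. X i \<omega> \<in> B} = p"
  shows "integrable M (\<lambda>\<omega>. exp (c * (\<Sum>i\<in>I. indicator B (X i \<omega>))))"
    and "expectation (\<lambda>\<omega>. exp (c * (\<Sum>i\<in>I. indicator B (X i \<omega>)))) \<le> exp (real (card I) * p * (exp c - 1))"
proof -
  define Z where "Z i \<omega> = exp (c * indicator B (X i \<omega>))" for i \<omega>
  have eq: "exp (c * (\<Sum>i\<in>I. indicator B (X i \<omega>))) = (\<Prod>i\<in>I. Z i \<omega>)" for \<omega>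
    unfolding Z_def sum_distrib_left by (rule exp_sum[OF I])
  have gm: "(\<lambda>t. exp (c * indicator B t)) \<in> borel_measurable borel"
    using B by measurable
  have indZ: "indep_vars (\<lambda>_. borel) Z I"
    unfolding Z_def by (rule indep_vars_compose2[OF ind]) (use gm in auto)
  have intZ: "integrable M (Z i)" if "i \<in> I" for i
  proof (rule integrable_const_bound[where B="exp \<bar>c\<bar>"])
    show "AE x in M. norm (Z i x) \<le> exp \<bar>c\<bar>"
      by (auto simp: Z_def indicator_def)
    show "Z i \<in> borel_measurable M"
      unfolding Z_def using rv[OF that] gm by measurable
  qed
  have EZ: "expectation (Z i) = 1 + p * (exp c - 1)" if i: "i \<in> I" for i
  proof -
    let ?A = "{\<omega>\<in>space M. X i \<omega> \<in> B}"
    have A: "?A \<in> sets M" using rv[OF i] B by measurable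
    have "expectation (Z i) = expectation (\<lambda>\<omega>. 1 + (exp c - 1) * indicator ?A \<omega>)"
      unfolding Z_def by (intro Bochner_Integration.integral_cong) (auto simp: indicator_def)
    also have "\<dots> = 1 + (exp c - 1) * prob ?A"
      proof -
      have "integrable M (\<lambda>\<omega>. (exp c - 1) * indicat_real ?A \<omega>)"
        using A by (intro integrable_mult_right integrable_real_indicator) (auto simp: emeasure_eq_measure)
      thus ?thesis using A by (subst Bochner_Integration.integral_add) (auto simp: prob_space)
    qed
    finally show ?thesis using p[OF i] by simp
  qed
  show "integrable M (\<lambda>\<omega>. exp (c * (\<Sum>i\<in>I. indicator B (X i \<omega>))))"
    unfolding eq using indep_vars_integrable[OF I indZ intZ] by simp
  have "expectation (\<lambda>\<omega>. exp (c * (\<Sum>i\<in>I. indicator B (X i \<omega>)))) = (\<Prod>i\<in>I. expectation (Z i))"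
    unfolding eq using indep_vars_lebesgue_integral[OF I indZ intZ] by simp
  also have "\<dots> = (1 + p * (exp c - 1)) ^ card I"
    using EZ by simp
  also have "\<dots> \<le> exp (real (card I) * p * (exp c - 1))"
  proof (cases "I = {}")
    case True thus ?thesis by simp
  next
    case False
    then obtain i where i: "i \<in> I" by auto
    have p01: "0 \<le> p" "p \<le> 1" using p[OF i] by auto
    have "0 \<le> 1 + p * (exp c - 1)"
    proof -
      have "p * (exp c - 1) \<ge> p * (-1)" using p01 by (intro mult_left_mono) auto
      thus ?thesis using p01 by simp
    qed
    hence "(1 + p * (exp c - 1)) ^ card I \<le> exp (p * (exp c - 1)) ^ card I"
      by (intro power_mono) (auto simp: exp_ge_add_one_self add.commute)
    also have "\<dots> = exp (real (card I) * p * (exp c - 1))"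
      by (simp add: exp_of_nat_mult[symmetric] mult.assoc)
    finally show ?thesis .
  qed
  finally show "expectation (\<lambda>\<omega>. exp (c * (\<Sum>i\<in>I. indicator B (X i \<omega>)))) \<le> exp (real (card I) * p * (exp c - 1))" .
qed

lemma (in prob_space) chernoff:
  fixes X :: "'i \<Rightarrow> 'a \<Rightarrow> real"
  assumes I: "finite I" and ind: "indep_vars (\<lambda>_. borel) X I"
    and rv: "\<And>i. i \<in> I \<Longrightarrow> X i \<in> borel_measurable M"
    and B: "B \<in> sets borel"
    and p: "\<And>i. i \<in> I \<Longrightarrow> prob {\<omega>\<in>space M. X i \<omega> \<in> B} = p"
    and d: "0 < d" "d \<le> 2"
  shows "prob {\<omega>\<in>space M. d * (real (card I) * p) \<le> \<bar>(\<Sum>i\<in>I. indicator B (X i \<omega>)) - real (card I) * p\<bar>}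
          \<le> 2 * exp (- (d^2 * (real (card I) * p) / 4))"
proof -
  define mu where "mu = real (card I) * p"
  define S where "S \<omega> = (\<Sum>i\<in>I. indicator B (X i \<omega>) :: real)" for \<omega>
  define l where "l = d / 2"
  have l: "0 < l" "l \<le> 1" using d by (auto simp: l_def)
  have mu0: "0 \<le> mu"
  proof (cases "I = {}")
    case True thus ?thesis by (simp add: mu_def)
  next
    case False then obtain i where "i \<in> I" by auto
    thus ?thesis using p[of i] measure_nonneg[of M "{\<omega> \<in> space M. X i \<omega> \<in> B}"] by (simp add: mu_def)
  qed
  have Sm: "S \<in> borel_measurable M" unfolding S_def using rv B by measurable
  define A1 where "A1 = {\<omega>\<in>space M. exp (l * (mu + d * mu)) \<le> exp (l * S \<omega>)}"
  define A2 where "A2 = {\<omega>\<in>space M. exp ((- l) * (mu - d * mu)) \<le> exp ((- l) * S \<omega>)}"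
  have A1m: "A1 \<in> sets M" unfolding A1_def using Sm by measurable
  have A2m: "A2 \<in> sets M" unfolding A2_def using Sm by measurable
  have sub: "{\<omega>\<in>space M. d * mu \<le> \<bar>S \<omega> - mu\<bar>} \<subseteq> A1 \<union> A2"
  proof
    fix \<omega> assume "\<omega> \<in> {\<omega>\<in>space M. d * mu \<le> \<bar>S \<omega> - mu\<bar>}"
    hence \<omega>: "\<omega> \<in> space M" "d * mu \<le> \<bar>S \<omega> - mu\<bar>" by auto
    show "\<omega> \<in> A1 \<union> A2"
    proof (cases "S \<omega> \<ge> mu")
      case True
      hence "mu + d * mu \<le> S \<omega>" using \<omega> by auto
      hence "l * (mu + d * mu) \<le> l * S \<omega>" using l by (intro mult_left_mono) auto
      thus ?thesis using \<omega> by (auto simp: A1_def)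
    next
      case False
      hence "S \<omega> \<le> mu - d * mu" using \<omega> by auto
      hence "(- l) * (mu - d * mu) \<le> (- l) * S \<omega>" using l by (intro mult_left_mono_neg) auto
      thus ?thesis using \<omega> by (auto simp: A2_def)
    qed
  qed
  have key: "exp (mu * (exp c - 1)) / exp (c * (mu + s * d * mu)) \<le> exp (- (d^2 * mu / 4))"
    if c: "c = s * l" and s: "s = 1 \<or> s = -1" for c s
  proof -
    have "exp c - 1 - c \<le> l^2"
      using s
    proof
      assume "s = 1" thus ?thesis using exp_bound[of l] l c by simp
    next
      assume "s = -1" thus ?thesis using exp_neg_bound[of l] l c by simp
    qed
    hence f1: "mu * (exp c - 1 - c) \<le> mu * l^2" using mu0 by (intro mult_left_mono) auto
    have cs: "c * s = l" using s c by auto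
    have e1: "c * (s * d * mu) = l * d * mu" using cs
      by (metis mult.assoc mult.commute)
    have f2: "c * (mu + s * d * mu) = c * mu + l * d * mu" using e1 by (simp add: distrib_left)
    have f3: "mu * (exp c - 1) = mu * (exp c - 1 - c) + c * mu" by (simp add: algebra_simps)
    have "mu * (exp c - 1) - c * (mu + s * d * mu) \<le> mu * l^2 - l * d * mu"
      unfolding f2 f3 using f1 by linarith
    also have "\<dots> = - (d^2 * mu / 4)" unfolding l_def by (simp add: field_simps power2_eq_square)
    finally have "mu * (exp c - 1) - c * (mu + s * d * mu) \<le> - (d^2 * mu / 4)" .
    thus ?thesis by (simp add: exp_diff[symmetric])
  qed
  have P1: "prob A1 \<le> exp (- (d^2 * mu / 4))"
  proof -
    have "prob A1 \<le> expectation (\<lambda>\<omega>. exp (l * S \<omega>)) / exp (l * (mu + d * mu))"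
      unfolding A1_def
      by (rule integral_Markov_inequality_measure[where A="space M"])
         (use mgf_bound(1)[OF I ind rv B p, of l] in \<open>auto simp: S_def\<close>)
    also have "\<dots> \<le> exp (mu * (exp l - 1)) / exp (l * (mu + d * mu))"
      using mgf_bound(2)[OF I ind rv B p, of l] by (intro divide_right_mono) (auto simp: S_def mu_def mult_ac)
    also have "\<dots> \<le> exp (- (d^2 * mu / 4))" using key[of l 1] by simp
    finally show ?thesis .
  qed
  have P2: "prob A2 \<le> exp (- (d^2 * mu / 4))"
  proof -
    have "prob A2 \<le> expectation (\<lambda>\<omega>. exp ((- l) * S \<omega>)) / exp ((- l) * (mu - d * mu))"
      unfolding A2_def
      by (rule integral_Markov_inequality_measure[where A="space M"])
         (use mgf_bound(1)[OF I ind rv B p, of "- l"] in \<open>auto simp: S_def\<close>)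
    also have "\<dots> \<le> exp (mu * (exp (- l) - 1)) / exp ((- l) * (mu - d * mu))"
      using mgf_bound(2)[OF I ind rv B p, of "- l"] by (intro divide_right_mono) (auto simp: S_def mu_def mult_ac)
    also have "\<dots> \<le> exp (- (d^2 * mu / 4))" using key[of "- l" "-1"] by (simp add: algebra_simps)
    finally show ?thesis .
  qed
  have "prob {\<omega>\<in>space M. d * mu \<le> \<bar>S \<omega> - mu\<bar>} \<le> prob (A1 \<union> A2)"
    using sub A1m A2m by (intro finite_measure_mono) auto
  also have "\<dots> \<le> prob A1 + prob A2" using A1m A2m by (intro measure_subadditive) auto
  finally show ?thesis using P1 P2 unfolding S_def mu_def by simp
qed



lemma powr_diff_mvt:
  fixes a u w :: real
  assumes "0 < u" "u < w"
  shows "\<exists>z. u < z \<and> z < w \<and> w powr a - u powr a = (w - u) * (a * z powr (a - 1))"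
proof (rule MVT2[OF assms(2)])
  fix x assume "u \<le> x" "x \<le> w"
  hence "0 < x" using assms by auto
  thus "((\<lambda>z. z powr a) has_real_derivative a * x powr (a - 1)) (at x)"
    by (rule has_real_derivative_powr)
qed

lemma det_diff:
  fixes \<alpha> \<epsilon> u h :: real
  assumes "0 < \<alpha>" "0 < \<epsilon>" "\<epsilon> \<le> u" "0 < h"
  shows "\<bar>(u powr (-\<alpha>) - (u+h) powr (-\<alpha>)) / h - \<alpha> * u powr (-\<alpha>-1)\<bar> \<le> \<alpha> * (\<alpha>+1) * \<epsilon> powr (-\<alpha>-2) * h"
proof -
  have u0: "0 < u" using assms by auto
  obtain z where z: "u < z" "z < u + h" and ez: "(u+h) powr (-\<alpha>) - u powr (-\<alpha>) = h * (-\<alpha> * z powr (-\<alpha>-1))"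
    using powr_diff_mvt[of u "u+h" "-\<alpha>"] u0 assms by (auto simp: algebra_simps)
  have q: "(u powr (-\<alpha>) - (u+h) powr (-\<alpha>)) / h = \<alpha> * z powr (-\<alpha>-1)"
    using ez assms by (simp add: field_simps)
  obtain y where y: "u < y" "y < u + h" and ey: "(u+h) powr (-\<alpha>-1) - u powr (-\<alpha>-1) = h * ((-\<alpha>-1) * y powr (-\<alpha>-1-1))"
    using powr_diff_mvt[of u "u+h" "-\<alpha>-1"] u0 assms by (auto simp: algebra_simps)
  have zu: "z powr (-\<alpha>-1) \<le> u powr (-\<alpha>-1)" using z u0 assms by (intro powr_mono2') auto
  have zw: "(u+h) powr (-\<alpha>-1) \<le> z powr (-\<alpha>-1)" using z u0 assms by (intro powr_mono2') auto
  have ye: "y powr (-\<alpha>-2) \<le> \<epsilon> powr (-\<alpha>-2)" using y u0 assms by (intro powr_mono2') auto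
  have "u powr (-\<alpha>-1) - (u+h) powr (-\<alpha>-1) = h * ((\<alpha>+1) * y powr (-\<alpha>-2))"
    using ey by (simp add: algebra_simps)
  also have "\<dots> \<le> h * ((\<alpha>+1) * \<epsilon> powr (-\<alpha>-2))"
    using ye assms by (intro mult_left_mono) auto
  finally have b: "u powr (-\<alpha>-1) - (u+h) powr (-\<alpha>-1) \<le> h * ((\<alpha>+1) * \<epsilon> powr (-\<alpha>-2))" .
  have "\<bar>\<alpha> * z powr (-\<alpha>-1) - \<alpha> * u powr (-\<alpha>-1)\<bar> = \<alpha> * (u powr (-\<alpha>-1) - z powr (-\<alpha>-1))"
    using zu assms by (simp add: abs_if algebra_simps)
  also have "\<dots> \<le> \<alpha> * (u powr (-\<alpha>-1) - (u+h) powr (-\<alpha>-1))"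
    using zw assms by (intro mult_left_mono) auto
  also have "\<dots> \<le> \<alpha> * (h * ((\<alpha>+1) * \<epsilon> powr (-\<alpha>-2)))"
    using b assms by (intro mult_left_mono) auto
  finally show ?thesis unfolding q by (simp add: mult_ac)
qed

lemma det_main:
  fixes \<alpha> \<kappa> \<epsilon> u h E :: real and F :: "real \<Rightarrow> real" and n :: nat
  assumes "0 < \<alpha>" "0 < \<kappa>" "0 < \<epsilon>" "\<epsilon> \<le> u" "0 < h" "1 \<le> n"
    and E: "\<And>v. v \<ge> \<epsilon> * real n powr \<kappa> \<Longrightarrow> \<bar>v powr \<alpha> * F v - 1\<bar> \<le> E"
  shows "\<bar>real n * (F (u * real n powr \<kappa>) - F ((u+h) * real n powr \<kappa>)) / (h * real n powr (1 - \<alpha> * \<kappa>))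
           - \<alpha> * u powr (-\<alpha>-1)\<bar> \<le> 2 * \<epsilon> powr (-\<alpha>) * E / h + \<alpha> * (\<alpha>+1) * \<epsilon> powr (-\<alpha>-2) * h"
proof -
  define N where "N = real n powr \<kappa>"
  define w where "w = u + h"
  have n0: "0 < real n" using assms by auto
  have N0: "0 < N" using n0 by (simp add: N_def)
  have u0: "0 < u" "0 < w" using assms by (auto simp: w_def)
  have nm: "real n / real n powr (1 - \<alpha> * \<kappa>) = N powr \<alpha>"
    using n0 by (simp add: N_def powr_powr powr_diff mult.commute)
  define r1 where "r1 = (u * N) powr \<alpha> * F (u * N)"
  define r2 where "r2 = (w * N) powr \<alpha> * F (w * N)"
  have F1: "N powr \<alpha> * F (u * N) = u powr (-\<alpha>) * r1"
    using u0 N0 by (simp add: r1_def powr_mult powr_minus field_simps)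
  have F2: "N powr \<alpha> * F (w * N) = w powr (-\<alpha>) * r2"
    using u0 N0 by (simp add: r2_def powr_mult powr_minus field_simps)
  have X: "real n * (F (u * N) - F (w * N)) / (h * real n powr (1 - \<alpha> * \<kappa>))
        = (u powr (-\<alpha>) * r1 - w powr (-\<alpha>) * r2) / h"
  proof -
    have "real n * (F (u * N) - F (w * N)) / (h * real n powr (1 - \<alpha> * \<kappa>))
        = (real n / real n powr (1 - \<alpha> * \<kappa>)) * (F (u * N) - F (w * N)) / h" by simp
    also have "\<dots> = (N powr \<alpha> * F (u * N) - N powr \<alpha> * F (w * N)) / h" unfolding nm by (simp add: algebra_simps)
    finally show ?thesis unfolding F1 F2 .
  qed
  have e1: "\<bar>r1 - 1\<bar> \<le> E" unfolding r1_def
    using assms N0 by (intro E) (auto simp: N_def intro!: mult_right_mono)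
  have e2: "\<bar>r2 - 1\<bar> \<le> E" unfolding r2_def
    using assms N0 by (intro E) (auto simp: N_def w_def intro!: mult_right_mono)
  have pu: "u powr (-\<alpha>) \<le> \<epsilon> powr (-\<alpha>)" using assms by (intro powr_mono2') auto
  have pw: "w powr (-\<alpha>) \<le> \<epsilon> powr (-\<alpha>)" using assms by (intro powr_mono2') (auto simp: w_def)
  have "\<bar>u powr (-\<alpha>) * (r1 - 1) - w powr (-\<alpha>) * (r2 - 1)\<bar> \<le> u powr (-\<alpha>) * \<bar>r1 - 1\<bar> + w powr (-\<alpha>) * \<bar>r2 - 1\<bar>"
    using abs_triangle_ineq4[of "u powr (-\<alpha>) * (r1 - 1)" "w powr (-\<alpha>) * (r2 - 1)"]
    by (simp add: abs_mult)
  also have "\<dots> \<le> \<epsilon> powr (-\<alpha>) * E + \<epsilon> powr (-\<alpha>) * E"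
    using e1 e2 pu pw by (intro add_mono mult_mono) auto
  finally have A: "\<bar>u powr (-\<alpha>) * (r1 - 1) - w powr (-\<alpha>) * (r2 - 1)\<bar> / h \<le> 2 * \<epsilon> powr (-\<alpha>) * E / h"
    using assms by (intro divide_right_mono) (auto simp: mult_ac)
  have split: "(u powr (-\<alpha>) * r1 - w powr (-\<alpha>) * r2) / h - \<alpha> * u powr (-\<alpha>-1)
      = (u powr (-\<alpha>) * (r1 - 1) - w powr (-\<alpha>) * (r2 - 1)) / h + ((u powr (-\<alpha>) - w powr (-\<alpha>)) / h - \<alpha> * u powr (-\<alpha>-1))"
    using assms by (simp add: diff_divide_distrib add_divide_distrib algebra_simps)
  have Bd: "\<bar>(u powr (-\<alpha>) - w powr (-\<alpha>)) / h - \<alpha> * u powr (-\<alpha>-1)\<bar> \<le> \<alpha> * (\<alpha>+1) * \<epsilon> powr (-\<alpha>-2) * h"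
    unfolding w_def using assms by (intro det_diff) auto
  show ?thesis
    unfolding N_def[symmetric] w_def[symmetric] X split
    using A Bd abs_triangle_ineq[of "(u powr (-\<alpha>) * (r1 - 1) - w powr (-\<alpha>) * (r2 - 1)) / h"
       "(u powr (-\<alpha>) - w powr (-\<alpha>)) / h - \<alpha> * u powr (-\<alpha>-1)"]
      abs_divide[of "u powr (-\<alpha>) * (r1 - 1) - w powr (-\<alpha>) * (r2 - 1)" h] assms(5)
    by simp
qed

lemma tail_bound:
  fixes F :: "real \<Rightarrow> real" and \<alpha> :: real
  assumes lim: "((\<lambda>v. v powr \<alpha> * F v) \<longlongrightarrow> 1) at_top" and "0 < \<alpha>"
    and F: "\<And>v. 0 \<le> F v \<and> F v \<le> 1"
  shows "\<exists>C. \<forall>v\<ge>0. \<bar>v powr \<alpha> * F v - 1\<bar> \<le> C"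
proof -
  have "eventually (\<lambda>v. dist (v powr \<alpha> * F v) 1 < 1) at_top"
    using lim by (rule tendstoD) simp
  then obtain V where V: "\<And>v. v \<ge> V \<Longrightarrow> \<bar>v powr \<alpha> * F v - 1\<bar> < 1"
    by (auto simp: eventually_at_top_linorder dist_real_def)
  define W where "W = max V 0"
  show ?thesis
  proof (intro exI allI impI)
    fix v :: real assume v: "0 \<le> v"
    show "\<bar>v powr \<alpha> * F v - 1\<bar> \<le> 1 + W powr \<alpha> + 1"
    proof (cases "v \<ge> V")
      case True have "0 \<le> W powr \<alpha>" by simp
      thus ?thesis using V[of v] True by linarith
    next
      case False
      hence "v \<le> W" by (simp add: W_def)
      hence "v powr \<alpha> \<le> W powr \<alpha>" using v assms by (intro powr_mono2) auto
      moreover have "0 \<le> v powr \<alpha> * F v" "v powr \<alpha> * F v \<le> v powr \<alpha>"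
        using F[of v] by (auto intro: mult_left_le)
      ultimately show ?thesis by auto
    qed
  qed
qed

lemma tail_sup:
  fixes r :: "real \<Rightarrow> real" and \<epsilon> \<kappa> C :: real
  assumes lim: "(r \<longlongrightarrow> 1) at_top" and "0 < \<epsilon>" "0 < \<kappa>"
    and bnd: "\<And>v. v \<ge> 0 \<Longrightarrow> \<bar>r v - 1\<bar> \<le> C"
  defines "e \<equiv> \<lambda>n::nat. Sup ((\<lambda>v. \<bar>r v - 1\<bar>) ` {\<epsilon> * real n powr \<kappa>..})"
  shows "\<And>n v. \<epsilon> * real n powr \<kappa> \<le> v \<Longrightarrow> \<bar>r v - 1\<bar> \<le> e n"
    and "e \<longlonglongrightarrow> 0"
proof -
  have bdd: "bdd_above ((\<lambda>v. \<bar>r v - 1\<bar>) ` {\<epsilon> * real n powr \<kappa>..})" for n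
  proof (rule bdd_aboveI2)
    fix v assume "v \<in> {\<epsilon> * real n powr \<kappa>..}"
    hence "v \<ge> 0" using assms by (auto intro: order.trans[rotated])
    thus "\<bar>r v - 1\<bar> \<le> C" by (rule bnd)
  qed
  show up: "\<bar>r v - 1\<bar> \<le> e n" if "\<epsilon> * real n powr \<kappa> \<le> v" for n v
    unfolding e_def using that by (intro cSUP_upper bdd) auto
  show "e \<longlonglongrightarrow> 0"
  proof (rule tendstoI)
    fix \<eta> :: real assume \<eta>: "0 < \<eta>"
    have "eventually (\<lambda>v. dist (r v) 1 < \<eta>/2) at_top"
      using lim \<eta> by (intro tendstoD) auto
    then obtain V where V: "\<And>v. v \<ge> V \<Longrightarrow> \<bar>r v - 1\<bar> < \<eta>/2"
      by (auto simp: eventually_at_top_linorder dist_real_def)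
    have "filterlim (\<lambda>n::nat. \<epsilon> * real n powr \<kappa>) at_top at_top"
      using assms by real_asymp
    hence "eventually (\<lambda>n. \<epsilon> * real n powr \<kappa> \<ge> V) at_top"
      by (simp add: filterlim_at_top)
    thus "eventually (\<lambda>n. dist (e n) 0 < \<eta>) sequentially"
    proof (rule eventually_mono)
      fix n assume n: "\<epsilon> * real n powr \<kappa> \<ge> V"
      have "e n \<le> \<eta>/2" unfolding e_def
        by (rule cSUP_least) (use n V in \<open>auto intro: less_imp_le\<close>)
      moreover have "0 \<le> e n" using up[of n "\<epsilon> * real n powr \<kappa>"] by simp
      ultimately show "dist (e n) 0 < \<eta>" using \<eta> by simp
    qed
  qed
qed



lemma card_filter_sum:
  assumes "finite A"
  shows "real (card {x\<in>A. P x}) = (\<Sum>x\<in>A. if P x then 1 else 0)"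
proof -
  have "(\<Sum>x\<in>{x\<in>A. P x}. (1::real)) = (\<Sum>x\<in>A. if P x then 1 else 0)"
    by (rule sum.inter_filter[OF assms])
  thus ?thesis by simp
qed

lemma aux_eq: "(x::real) / y - a = (x - z) / y + (z / y - a)"
  by (simp add: diff_divide_distrib)

theorem lemmal:
  fixes M :: "'a measure" and \<tau> :: "nat \<Rightarrow> 'a \<Rightarrow> real"
    and \<alpha> \<kappa> \<epsilon> Mx :: real
  assumes "prob_space M"
    and "\<alpha> \<in> {0<..<1}" and "0 < \<kappa>" and "\<kappa> < 1 / \<alpha>"
    and "0 < \<epsilon>" and "\<epsilon> < Mx"
    and rv: "\<And>x. \<tau> x \<in> borel_measurable M"
    and indep: "prob_space.indep_vars M (\<lambda>_. borel) \<tau> UNIV"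
    and ident: "\<And>x. distr M borel (\<tau> x) = distr M borel (\<tau> 0)"
    and pos: "\<And>x. AE \<omega> in M. \<tau> x \<omega> > 0"
    and tail: "\<And>x. ((\<lambda>u. u powr \<alpha> * measure M {\<omega> \<in> space M. \<tau> x \<omega> \<ge> u}) \<longlongrightarrow> 1) at_top"
  shows "\<exists>h :: nat \<Rightarrow> real. (h \<longlonglongrightarrow> 0) \<and> (\<forall>n. h n > 0) \<and>
    (AE \<omega> in M.
      (\<lambda>n. SUP u \<in> {\<epsilon>..<Mx} \<inter> range (\<lambda>k::int. h n * of_int k).
          \<bar>real (card (T_set \<kappa> (\<lambda>x. \<tau> x \<omega>) u (ereal (u + h n)) n)) / (h n * real n powr (1 - \<alpha> * \<kappa>))
            - \<alpha> * u powr (- \<alpha> - 1)\<bar>) \<longlonglongrightarrow> 0)"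
proof -
  interpret P: prob_space M by fact
  have a0: "0 < \<alpha>" and a1: "\<alpha> < 1" using assms(2) by auto
  have ak: "\<alpha> * \<kappa> < 1" using assms(4) a0 by (simp add: field_simps)
  define g where "g = (1 - \<alpha> * \<kappa>) / 6"
  have g0: "0 < g" using ak by (simp add: g_def)
  have g6: "1 - \<alpha> * \<kappa> = 6 * g" by (simp add: g_def)
  define F where "F v = measure M {\<omega> \<in> space M. \<tau> 0 \<omega> \<ge> v}" for v
  have F01: "0 \<le> F v \<and> F v \<le> 1" for v by (simp add: F_def)
  have limr: "((\<lambda>v. v powr \<alpha> * F v) \<longlongrightarrow> 1) at_top" using tail[of 0] by (simp add: F_def)
  obtain C where C: "\<And>v. v \<ge> 0 \<Longrightarrow> \<bar>v powr \<alpha> * F v - 1\<bar> \<le> C"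
    using tail_bound[OF limr a0 F01] by auto
  define e where "e = (\<lambda>n::nat. Sup ((\<lambda>v. \<bar>v powr \<alpha> * F v - 1\<bar>) ` {\<epsilon> * real n powr \<kappa>..}))"
  have eup: "\<And>n v. \<epsilon> * real n powr \<kappa> \<le> v \<Longrightarrow> \<bar>v powr \<alpha> * F v - 1\<bar> \<le> e n"
    and elim: "e \<longlonglongrightarrow> 0"
    using tail_sup[OF limr assms(5) assms(3) C] unfolding e_def by auto
  have e0: "0 \<le> e n" for n using eup[of n "\<epsilon> * real n powr \<kappa>"] by simp
  define h where "h n = max (sqrt (e n)) ((real n + 1) powr (- g))" for n
  have hge: "h n \<ge> (real n + 1) powr (- g)" for n unfolding h_def by simp
  have hpos: "h n > 0" for n
  proof -
    have "0 < (real n + 1) powr (- g)" by simp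
    thus ?thesis using hge[of n] by linarith
  qed
  have hsq: "sqrt (e n) \<le> h n" for n unfolding h_def by simp
  have hlim: "h \<longlonglongrightarrow> 0"
  proof -
    have "(\<lambda>n. sqrt (e n)) \<longlonglongrightarrow> sqrt 0" by (intro tendsto_real_sqrt elim)
    moreover have "(\<lambda>n::nat. (real n + 1) powr (- g)) \<longlonglongrightarrow> 0" using g0 by real_asymp
    ultimately have "(\<lambda>n. max (sqrt (e n)) ((real n + 1) powr (- g))) \<longlonglongrightarrow> max 0 0"
      by (intro tendsto_max) auto
    thus ?thesis by (simp add: h_def[abs_def])
  qed
  define m where "m n = real n powr (1 - \<alpha> * \<kappa>)" for n :: nat
  define B where "B n u = {t. u \<le> t / real n powr \<kappa> \<and> t / real n powr \<kappa> < u + h n}" for n :: nat and u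
  define p where "p n u = P.prob {\<omega>\<in>space M. \<tau> 0 \<omega> \<in> B n u}" for n u
  define mu where "mu n u = real n * p n u" for n u
  define D where "D n u = mu n u / (h n * m n)" for n u
  define S where "S n u \<omega> = (\<Sum>i\<in>{1..n}. indicator (B n u) (\<tau> i \<omega>) :: real)" for n u \<omega>
  define d where "d n = (real n + 1) powr (- g)" for n :: nat
  define err where "err n = 2 * \<epsilon> powr (-\<alpha>) * sqrt (e n) + \<alpha> * (\<alpha>+1) * \<epsilon> powr (-\<alpha>-2) * h n" for n
  have Bm: "B n u \<in> sets borel" for n u unfolding B_def by measurable
  have mpos: "m n > 0" if "n \<ge> 1" for n using that by (simp add: m_def)
  have pB: "p n u = F (u * real n powr \<kappa>) - F ((u + h n) * real n powr \<kappa>)" if n: "n \<ge> 1" for n u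
  proof -
    have N: "real n powr \<kappa> > 0" using n by simp
    have "{\<omega>\<in>space M. \<tau> 0 \<omega> \<in> B n u} = {\<omega>\<in>space M. \<tau> 0 \<omega> \<ge> u * real n powr \<kappa>} - {\<omega>\<in>space M. \<tau> 0 \<omega> \<ge> (u + h n) * real n powr \<kappa>}"
      using N by (auto simp: B_def field_simps)
    moreover have "{\<omega>\<in>space M. \<tau> 0 \<omega> \<ge> (u + h n) * real n powr \<kappa>} \<subseteq> {\<omega>\<in>space M. \<tau> 0 \<omega> \<ge> u * real n powr \<kappa>}"
      using N hpos[of n] by (auto intro: order.trans[rotated] mult_right_mono)
    ultimately show ?thesis unfolding p_def F_def using rv[of 0]
      by (subst P.finite_measure_Diff[symmetric]) (auto)
  qed
  have det: "\<bar>D n u - \<alpha> * u powr (-\<alpha>-1)\<bar> \<le> err n" if n: "n \<ge> 1" and u: "\<epsilon> \<le> u" for n u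
  proof -
    have "\<bar>D n u - \<alpha> * u powr (-\<alpha>-1)\<bar> \<le> 2 * \<epsilon> powr (-\<alpha>) * e n / h n + \<alpha> * (\<alpha>+1) * \<epsilon> powr (-\<alpha>-2) * h n"
      unfolding D_def mu_def pB[OF n] m_def
      by (rule det_main[OF a0 assms(3) assms(5) u hpos n]) (rule eup)
    moreover have "e n / h n \<le> sqrt (e n)"
    proof -
      have "e n = sqrt (e n) * sqrt (e n)" using e0[of n] by simp
      also have "\<dots> \<le> sqrt (e n) * h n" using hsq[of n] e0[of n] by (intro mult_left_mono) auto
      finally show ?thesis using hpos[of n] by (simp add: field_simps)
    qed
    hence "(2 * \<epsilon> powr (-\<alpha>)) * (e n / h n) \<le> (2 * \<epsilon> powr (-\<alpha>)) * sqrt (e n)"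
      by (intro mult_left_mono) auto
    hence "2 * \<epsilon> powr (-\<alpha>) * e n / h n \<le> 2 * \<epsilon> powr (-\<alpha>) * sqrt (e n)" by simp
    ultimately show ?thesis unfolding err_def by linarith
  qed
  have errlim: "err \<longlonglongrightarrow> 0"
  proof -
    have "(\<lambda>n. 2 * \<epsilon> powr (-\<alpha>) * sqrt (e n) + \<alpha> * (\<alpha>+1) * \<epsilon> powr (-\<alpha>-2) * h n) \<longlonglongrightarrow>
          2 * \<epsilon> powr (-\<alpha>) * sqrt 0 + \<alpha> * (\<alpha>+1) * \<epsilon> powr (-\<alpha>-2) * 0"
      by (intro tendsto_intros elim hlim)
    thus ?thesis by (simp add: err_def[abs_def])
  qed
  have probi: "P.prob {\<omega>\<in>space M. \<tau> i \<omega> \<in> A} = P.prob {\<omega>\<in>space M. \<tau> 0 \<omega> \<in> A}" if A: "A \<in> sets borel" for i A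
  proof -
    have s1: "{\<omega>\<in>space M. \<tau> j \<omega> \<in> A} = \<tau> j -` A \<inter> space M" for j by blast
    have "measure (distr M borel (\<tau> i)) A = measure (distr M borel (\<tau> 0)) A" using ident[of i] by metis
    thus ?thesis unfolding s1 using measure_distr[OF rv A, of i] measure_distr[OF rv A, of 0] by simp
  qed
  have card_eq: "real (card (T_set \<kappa> (\<lambda>x. \<tau> x \<omega>) u (ereal (u + h n)) n)) = S n u \<omega>" for n u \<omega>
  proof -
    have "real (card (T_set \<kappa> (\<lambda>x. \<tau> x \<omega>) u (ereal (u + h n)) n)) =
          (\<Sum>x\<in>{1..n}. if u \<le> \<tau> x \<omega> / real n powr \<kappa> \<and> ereal (\<tau> x \<omega> / real n powr \<kappa>) < ereal (u + h n) then 1 else 0)"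
      unfolding T_set_def by (rule card_filter_sum) simp
    also have "\<dots> = S n u \<omega>"
      unfolding S_def by (rule sum.cong) (auto simp: indicator_def B_def)
    finally show ?thesis .
  qed
  define K where "K n = {k::int. \<epsilon> \<le> h n * of_int k \<and> h n * of_int k < Mx}" for n
  define Ev where "Ev n k = {\<omega>\<in>space M. d n * mu n (h n * of_int k) \<le> \<bar>S n (h n * of_int k) \<omega> - mu n (h n * of_int k)\<bar>}" for n k
  define Bad where "Bad n = (\<Union>k\<in>K n. Ev n k)" for n
  have chern: "P.prob (Ev n k) \<le> 2 * exp (- ((d n)^2 * mu n (h n * of_int k) / 4))" for n k
  proof -
    have ind: "P.indep_vars (\<lambda>_. borel) \<tau> {1..n}" by (rule P.indep_vars_subset[OF indep]) auto
    have d: "0 < d n" "d n \<le> 2"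
    proof -
      show "0 < d n" by (simp add: d_def)
      have "d n \<le> 1" unfolding d_def using powr_mono2'[of "-g" 1 "real n + 1"] g0 by simp
      thus "d n \<le> 2" by simp
    qed
    have "P.prob {\<omega>\<in>space M. d n * (real (card {1..n}) * p n (h n * of_int k)) \<le>
        \<bar>(\<Sum>i\<in>{1..n}. indicator (B n (h n * of_int k)) (\<tau> i \<omega>)) - real (card {1..n}) * p n (h n * of_int k)\<bar>}
        \<le> 2 * exp (- ((d n)^2 * (real (card {1..n}) * p n (h n * of_int k)) / 4))"
    proof (rule P.chernoff[OF _ ind rv Bm _ d])
      show "P.prob {\<omega> \<in> space M. \<tau> i \<omega> \<in> B n (h n * of_int k)} = p n (h n * of_int k)" for i
        unfolding p_def by (rule probi[OF Bm])
    qed simp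
    thus ?thesis by (simp add: Ev_def S_def mu_def)
  qed
  have Kfin: "finite (K n)" and Kcard: "real (card (K n)) \<le> (Mx - \<epsilon>) / h n + 1" for n
  proof -
    have hn: "h n > 0" by (rule hpos)
    have sub: "K n \<subseteq> {\<lceil>\<epsilon> / h n\<rceil> .. \<lfloor>Mx / h n\<rfloor>}"
    proof
      fix k assume "k \<in> K n"
      hence k: "\<epsilon> \<le> h n * of_int k" "h n * of_int k < Mx" by (auto simp: K_def)
      have "\<epsilon> / h n \<le> of_int k" using k hn by (simp add: field_simps)
      moreover have "of_int k \<le> Mx / h n" using k hn by (simp add: field_simps)
      ultimately show "k \<in> {\<lceil>\<epsilon> / h n\<rceil> .. \<lfloor>Mx / h n\<rfloor>}" by (simp add: ceiling_le_iff le_floor_iff)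
    qed
    show "finite (K n)" by (rule finite_subset[OF sub]) auto
    have "card (K n) \<le> card {\<lceil>\<epsilon> / h n\<rceil> .. \<lfloor>Mx / h n\<rfloor>}" by (rule card_mono[OF _ sub]) auto
    hence "real (card (K n)) \<le> real (nat (\<lfloor>Mx / h n\<rfloor> + 1 - \<lceil>\<epsilon> / h n\<rceil>))" by simp
    also have "\<dots> \<le> (Mx - \<epsilon>) / h n + 1"
    proof -
      have f1: "real_of_int \<lfloor>Mx / h n\<rfloor> \<le> Mx / h n" by (rule of_int_floor_le)
      have f2: "\<epsilon> / h n \<le> real_of_int \<lceil>\<epsilon> / h n\<rceil>" by (rule le_of_int_ceiling)
      have f3: "(Mx - \<epsilon>) / h n = Mx / h n - \<epsilon> / h n" by (simp add: diff_divide_distrib)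
      have f4: "0 \<le> (Mx - \<epsilon>) / h n" using assms(6) hn by simp
      show ?thesis
      proof (cases "\<lfloor>Mx / h n\<rfloor> + 1 - \<lceil>\<epsilon> / h n\<rceil> \<ge> 0")
        case True
        hence "real (nat (\<lfloor>Mx / h n\<rfloor> + 1 - \<lceil>\<epsilon> / h n\<rceil>)) = real_of_int (\<lfloor>Mx / h n\<rfloor> + 1 - \<lceil>\<epsilon> / h n\<rceil>)"
          by simp
        moreover have "real_of_int (\<lfloor>Mx / h n\<rfloor> + 1 - \<lceil>\<epsilon> / h n\<rceil>) = real_of_int \<lfloor>Mx / h n\<rfloor> + 1 - real_of_int \<lceil>\<epsilon> / h n\<rceil>" by simp
        ultimately show ?thesis using f1 f2 f3 by linarith
      next
        case False thus ?thesis using f4 by simp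
      qed
    qed
    finally show "real (card (K n)) \<le> (Mx - \<epsilon>) / h n + 1" .
  qed
  have Evm: "Ev n k \<in> sets M" for n k
    unfolding Ev_def S_def using rv Bm by measurable
  have Badm: "Bad n \<in> sets M" for n
    unfolding Bad_def using Kfin Evm by auto
  define c0 where "c0 = \<alpha> * Mx powr (-\<alpha>-1) / 2"
  have c0: "0 < c0" using a0 assms(5,6) by (simp add: c0_def)
  have au: "2 * c0 \<le> \<alpha> * u powr (-\<alpha>-1)" "\<alpha> * u powr (-\<alpha>-1) \<le> \<alpha> * \<epsilon> powr (-\<alpha>-1)"
    if "\<epsilon> \<le> u" "u < Mx" for u
  proof -
    have "Mx powr (-\<alpha>-1) \<le> u powr (-\<alpha>-1)" using that a0 assms(5) by (intro powr_mono2') auto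
    thus "2 * c0 \<le> \<alpha> * u powr (-\<alpha>-1)" using a0 by (simp add: c0_def)
    have "u powr (-\<alpha>-1) \<le> \<epsilon> powr (-\<alpha>-1)" using that a0 assms(5) by (intro powr_mono2') auto
    thus "\<alpha> * u powr (-\<alpha>-1) \<le> \<alpha> * \<epsilon> powr (-\<alpha>-1)" using a0 by simp
  qed
  have "eventually (\<lambda>n. dist (err n) 0 < c0) sequentially" using errlim c0 by (rule tendstoD)
  then obtain N0 where N0: "\<And>n. n \<ge> N0 \<Longrightarrow> \<bar>err n\<bar> < c0" by (auto simp: eventually_sequentially)
  have muD: "mu n u = D n u * (h n * m n)" if "n \<ge> 1" for n u
    using hpos[of n] mpos[OF that] by (simp add: D_def)
  have mu_low: "mu n (h n * of_int k) \<ge> c0 * h n * m n" if n: "n \<ge> 1" "n \<ge> N0" and k: "k \<in> K n" for n k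
  proof -
    let ?u = "h n * of_int k"
    have u: "\<epsilon> \<le> ?u" "?u < Mx" using k by (auto simp: K_def)
    have "c0 \<le> D n ?u" using det[OF n(1) u(1)] au(1)[OF u] N0[OF n(2)] by linarith
    hence "c0 * (h n * m n) \<le> D n ?u * (h n * m n)" using hpos[of n] mpos[OF n(1)] by (intro mult_right_mono) auto
    thus ?thesis using muD[OF n(1)] by (simp add: mult_ac)
  qed
  define bnd where "bnd n = 2 * ((Mx - \<epsilon>) * (real n + 1) powr g + 1) * exp (- (c0 * (real n + 1) powr (-3*g) * real n powr (6*g) / 4))" for n :: nat
  have Bad_le: "measure M (Bad n) \<le> bnd n" if n: "n \<ge> 1" "n \<ge> N0" for n
  proof -
    have ex: "2 * exp (- ((d n)^2 * mu n (h n * of_int k) / 4)) \<le> 2 * exp (- (c0 * (real n + 1) powr (-3*g) * real n powr (6*g) / 4))"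
      if k: "k \<in> K n" for k
    proof -
      have dd: "(d n)^2 * (real n + 1) powr (-g) = (real n + 1) powr (-3*g)"
        by (simp add: d_def power2_eq_square powr_add[symmetric])
      have "c0 * (real n + 1) powr (-3*g) * real n powr (6*g) = (d n)^2 * (c0 * (real n + 1) powr (-g) * m n)"
        unfolding m_def g6 dd[symmetric] by (simp add: mult_ac)
      also have "\<dots> \<le> (d n)^2 * (c0 * h n * m n)"
        using hge[of n] c0 mpos[OF n(1)] by (intro mult_left_mono mult_right_mono) auto
      also have "\<dots> \<le> (d n)^2 * mu n (h n * of_int k)"
        using mu_low[OF n k] by (intro mult_left_mono) auto
      finally show ?thesis by simp
    qed
    have "measure M (Bad n) \<le> (\<Sum>k\<in>K n. P.prob (Ev n k))"
      unfolding Bad_def using Kfin Evm by (intro P.finite_measure_subadditive_finite) auto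
    also have "\<dots> \<le> (\<Sum>k\<in>K n. 2 * exp (- (c0 * (real n + 1) powr (-3*g) * real n powr (6*g) / 4)))"
      by (intro sum_mono order.trans[OF chern ex])
    also have "\<dots> = real (card (K n)) * (2 * exp (- (c0 * (real n + 1) powr (-3*g) * real n powr (6*g) / 4)))"
      by simp
    also have "\<dots> \<le> ((Mx - \<epsilon>) * (real n + 1) powr g + 1) * (2 * exp (- (c0 * (real n + 1) powr (-3*g) * real n powr (6*g) / 4)))"
    proof (intro mult_right_mono)
      have "1 / h n \<le> 1 / (real n + 1) powr (- g)" using hge[of n] hpos[of n] by (intro divide_left_mono) auto
      also have "\<dots> = (real n + 1) powr g" by (simp add: powr_minus divide_inverse)
      finally have "(Mx - \<epsilon>) * (1 / h n) \<le> (Mx - \<epsilon>) * (real n + 1) powr g"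
        using assms(6) by (intro mult_left_mono) auto
      thus "real (card (K n)) \<le> (Mx - \<epsilon>) * (real n + 1) powr g + 1" using Kcard[of n] by simp
    qed simp
    also have "\<dots> = bnd n" by (simp add: bnd_def mult_ac)
    finally show ?thesis .
  qed
  have "((\<lambda>n::nat. real n ^ 2 * (2 * ((Mx - \<epsilon>) * (real n + 1) powr g + 1) * exp (- (c0 * (real n + 1) powr (-3*g) * real n powr (6*g) / 4)))) \<longlongrightarrow> 0) at_top"
    using g0 c0 assms(6) by real_asymp
  hence "eventually (\<lambda>n. dist (real n ^ 2 * bnd n) 0 < 1) sequentially"
    unfolding bnd_def by (intro tendstoD) auto
  then obtain N2 where N2: "\<And>n. n \<ge> N2 \<Longrightarrow> \<bar>real n ^ 2 * bnd n\<bar> < 1" by (auto simp: eventually_sequentially)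
  have summ: "summable (\<lambda>n. measure M (Bad n))"
  proof (rule summable_comparison_test'[OF inverse_power_summable[of 2, where 'a=real]])
    fix n :: nat assume n: "n \<ge> max 1 (max N0 N2)"
    hence n1: "real n \<ge> 1" by simp
    have "measure M (Bad n) \<le> bnd n" using n by (intro Bad_le) auto
    also have "\<dots> \<le> inverse (real n ^ 2)"
    proof -
      have "real n ^ 2 * bnd n \<le> 1" using N2[of n] n by auto
      thus ?thesis using n1 by (simp add: field_simps)
    qed
    finally show "norm (measure M (Bad n)) \<le> inverse (real n ^ 2)" by simp
  qed simp
  have BC: "AE \<omega> in M. eventually (\<lambda>n. \<omega> \<in> space M - Bad n) sequentially"
    by (rule borel_cantelli_AE1[OF Badm _ summ]) (simp add: P.emeasure_finite less_top[symmetric])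
  define A where "A = \<alpha> * \<epsilon> powr (-\<alpha>-1)"
  define bb where "bb n = d n * (A + err n) + err n" for n
  have bblim: "bb \<longlonglongrightarrow> 0"
  proof -
    have dlim: "d \<longlonglongrightarrow> 0" unfolding d_def using g0 by real_asymp
    have "(\<lambda>n. d n * (A + err n) + err n) \<longlonglongrightarrow> 0 * (A + 0) + 0"
      by (intro tendsto_intros dlim errlim)
    thus ?thesis by (simp add: bb_def[abs_def])
  qed
  have "eventually (\<lambda>n. dist (h n) 0 < Mx - \<epsilon>) sequentially" using hlim assms(6) by (intro tendstoD) auto
  then obtain N4 where N4: "\<And>n. n \<ge> N4 \<Longrightarrow> h n < Mx - \<epsilon>"
    by (auto simp: eventually_sequentially abs_less_iff)
  show ?thesis
  proof (intro exI conjI allI)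
    show "h \<longlonglongrightarrow> 0" by (rule hlim)
    show "h n > 0" for n by (rule hpos)
    show "AE \<omega> in M.
      (\<lambda>n. SUP u \<in> {\<epsilon>..<Mx} \<inter> range (\<lambda>k::int. h n * of_int k).
          \<bar>real (card (T_set \<kappa> (\<lambda>x. \<tau> x \<omega>) u (ereal (u + h n)) n)) / (h n * real n powr (1 - \<alpha> * \<kappa>))
            - \<alpha> * u powr (- \<alpha> - 1)\<bar>) \<longlonglongrightarrow> 0"
      using BC
    proof eventually_elim
      case (elim \<omega>)
      then obtain N3 where N3: "\<And>n. n \<ge> N3 \<Longrightarrow> \<omega> \<in> space M \<and> \<omega> \<notin> Bad n"
        by (auto simp: eventually_sequentially)
      define V where "V n u = \<bar>real (card (T_set \<kappa> (\<lambda>x. \<tau> x \<omega>) u (ereal (u + h n)) n)) / (h n * real n powr (1 - \<alpha> * \<kappa>))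
            - \<alpha> * u powr (- \<alpha> - 1)\<bar>" for n u
      define U where "U n = {\<epsilon>..<Mx} \<inter> range (\<lambda>k::int. h n * of_int k)" for n
      have Vb: "V n u \<le> bb n" if n: "n \<ge> max 1 N3" and u: "u \<in> U n" for n u
      proof -
        obtain k where k: "u = h n * of_int k" using u by (auto simp: U_def)
        have uu: "\<epsilon> \<le> u" "u < Mx" using u by (auto simp: U_def)
        have kK: "k \<in> K n" using uu k by (simp add: K_def)
        have n1: "n \<ge> 1" using n by simp
        have "\<omega> \<in> space M" "\<omega> \<notin> Bad n" using N3[of n] n by auto
        hence "\<omega> \<notin> Ev n k" using kK by (auto simp: Bad_def)
        hence lt: "\<bar>S n u \<omega> - mu n u\<bar> < d n * mu n u" using \<open>\<omega> \<in> space M\<close> by (auto simp: Ev_def k)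
        have hm: "h n * m n > 0" using hpos[of n] mpos[OF n1] by simp
        have eq: "real (card (T_set \<kappa> (\<lambda>x. \<tau> x \<omega>) u (ereal (u + h n)) n)) / (h n * real n powr (1 - \<alpha> * \<kappa>))
            - \<alpha> * u powr (- \<alpha> - 1) = (S n u \<omega> - mu n u) / (h n * m n) + (D n u - \<alpha> * u powr (- \<alpha> - 1))"
        proof -
          have c: "real (card (T_set \<kappa> (\<lambda>x. \<tau> x \<omega>) u (ereal (u + h n)) n)) = S n u \<omega>" by (rule card_eq)
          have mm: "h n * real n powr (1 - \<alpha> * \<kappa>) = h n * m n" by (simp add: m_def)
          show ?thesis unfolding c mm D_def by (rule aux_eq)
        qed
        have "V n u \<le> \<bar>S n u \<omega> - mu n u\<bar> / (h n * m n) + \<bar>D n u - \<alpha> * u powr (- \<alpha> - 1)\<bar>"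
        proof -
          have "V n u \<le> \<bar>(S n u \<omega> - mu n u) / (h n * m n)\<bar> + \<bar>D n u - \<alpha> * u powr (- \<alpha> - 1)\<bar>"
            unfolding V_def eq by (rule abs_triangle_ineq)
          moreover have "\<bar>(S n u \<omega> - mu n u) / (h n * m n)\<bar> = \<bar>S n u \<omega> - mu n u\<bar> / (h n * m n)"
            using hm by (simp add: abs_divide)
          ultimately show ?thesis by linarith
        qed
        also have "\<dots> \<le> d n * mu n u / (h n * m n) + err n"
          using lt hm det[OF n1 uu(1)] by (intro add_mono divide_right_mono) auto
        also have "d n * mu n u / (h n * m n) = d n * D n u" by (simp add: D_def)
        also have "\<dots> \<le> d n * (A + err n)"
        proof -
          have "D n u \<le> A + err n" using det[OF n1 uu(1)] au(2)[OF uu] unfolding A_def by linarith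
          thus ?thesis by (intro mult_left_mono) (auto simp: d_def)
        qed
        finally show ?thesis by (simp add: bb_def)
      qed
      have V0: "0 \<le> V n u" for n u by (simp add: V_def)
      have ne: "U n \<noteq> {}" if "n \<ge> N4" for n
      proof -
        define k where "k = \<lceil>\<epsilon> / h n\<rceil>"
        have hn: "h n > 0" by (rule hpos)
        have "\<epsilon> / h n \<le> of_int k" unfolding k_def by (rule le_of_int_ceiling)
        hence a: "\<epsilon> \<le> h n * of_int k" using hn by (simp add: field_simps)
        have "of_int k \<le> \<epsilon> / h n + 1" unfolding k_def by (rule of_int_ceiling_le_add_one)
        hence "h n * of_int k \<le> h n * (\<epsilon> / h n + 1)" using hn by (intro mult_left_mono) auto
        also have "\<dots> = \<epsilon> + h n" using hn by (simp add: field_simps)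
        also have "\<dots> < Mx" using N4[OF that] by simp
        finally have "h n * of_int k \<in> U n" using a unfolding U_def by (intro IntI) (auto intro: rangeI)
        thus ?thesis by blast
      qed
      have lo: "eventually (\<lambda>n. 0 \<le> (SUP u\<in>U n. V n u)) sequentially"
        and hi: "eventually (\<lambda>n. (SUP u\<in>U n. V n u) \<le> bb n) sequentially"
      proof -
        have *: "0 \<le> (SUP u\<in>U n. V n u) \<and> (SUP u\<in>U n. V n u) \<le> bb n" if n: "n \<ge> max (max 1 N3) N4" for n
        proof -
          have ne': "U n \<noteq> {}" using ne n by auto
          have bdd: "bdd_above (V n ` U n)" using Vb n by (intro bdd_aboveI2[of _ _ "bb n"]) auto
          obtain u where u: "u \<in> U n" using ne' by auto
          have "0 \<le> V n u" by (rule V0)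
          also have "\<dots> \<le> (SUP u\<in>U n. V n u)" by (rule cSUP_upper[OF u bdd])
          finally have "0 \<le> (SUP u\<in>U n. V n u)" .
          moreover have "(SUP u\<in>U n. V n u) \<le> bb n" using Vb n ne' by (intro cSUP_least) auto
          ultimately show ?thesis by simp
        qed
        show "eventually (\<lambda>n. 0 \<le> (SUP u\<in>U n. V n u)) sequentially"
          unfolding eventually_sequentially using * by blast
        show "eventually (\<lambda>n. (SUP u\<in>U n. V n u) \<le> bb n) sequentially"
          unfolding eventually_sequentially using * by blast
      qed
      have "(\<lambda>n. SUP u\<in>U n. V n u) \<longlonglongrightarrow> 0"
        by (rule tendsto_sandwich[OF lo hi tendsto_const bblim])
      thus ?case by (simp add: U_def V_def)
    qed
  qed
qed

end
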